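(* Let $\Omega\subset\mathbb{R}^N$ be a bounded open set and let $p,q:\Omega\to[1,\infty)$ be measurable with $q(x)\le p(x)\le p_+<\infty$ for all $x\in\Omega$. Assume there exist $\alpha>0$ and a sequence $\{E_n\}$ of measurable subsets of $\Omega$ with $|E_n|\to0$ such that $\|\chi_{E_n}\|_{r'(\cdot)}\ge\alpha$ for all $n$. Then $L^{p(\cdot)}(\Omega)$ is not almost-compactly embedded in $L^{q(\cdot)}(\Omega)$.
   Context: For measurable $e:\Omega\to[1,\infty)$, $\|u\|_{e(\cdot)}=\inf\{\lambda>0:\int_\Omega|u(x)/\lambda|^{e(x)}dx\le1\}$ and $L^{e(\cdot)}(\Omega)$ is the set of measurable $u$ with finite norm. Here $r(x)=p(x)/q(x)$ and $r'(x)=p(x)/(p(x)-q(x))\in(1,\infty]$, with $r'(x)=\infty$ where $p(x)=q(x)$; for this exponent $\|v\|_{r'(\cdot)}=\inf\{\lambda>0:\int_{\{r'<\infty\}}|v/\lambda|^{r'(x)}dx+\operatorname{ess\,sup}_{\{r'=\infty\}}|v/\lambda|\le1\}$. Almost-compact embedding: for Banach function spaces $X,Y$ on $\Omega$, $X$ is almost-compactly embedded in $Y$ if for every sequence $\{E_n\}$ of measurable subsets of $\Omega$ with $\chi_{E_n}\to0$ pointwise a.e. one has $\lim_{n\to\infty}\sup_{\|u\|_X\le1}\|u\chi_{E_n}\|_Y=0$. *)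

theory Defs
  imports "HOL-Analysis.Analysis"
begin

definition vmodular :: "'a::euclidean_space set \<Rightarrow> ('a \<Rightarrow> real) \<Rightarrow> ('a \<Rightarrow> real) \<Rightarrow> ennreal" where
  "vmodular \<Omega> e u = (\<integral>\<^sup>+ x \<in> \<Omega>. ennreal (\<bar>u x\<bar> powr e x) \<partial>lebesgue)"

text \<open>Luxemburg norm, ennreal-valued (infinite when no admissible lambda exists).\<close>
definition vnorm :: "'a::euclidean_space set \<Rightarrow> ('a \<Rightarrow> real) \<Rightarrow> ('a \<Rightarrow> real) \<Rightarrow> ennreal" where
  "vnorm \<Omega> e u = (INF l \<in> {l::real. l > 0 \<and> vmodular \<Omega> e (\<lambda>x. u x / l) \<le> 1}. ennreal l)"

definition vLp :: "'a::euclidean_space set \<Rightarrow> ('a \<Rightarrow> real) \<Rightarrow> ('a \<Rightarrow> real) set" where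
  "vLp \<Omega> e = {u. set_borel_measurable lebesgue \<Omega> u \<and> vnorm \<Omega> e u < \<infinity>}"

text \<open>Essential supremum of abs f over S (w.r.t. Lebesgue measure); equals 0 if S is null.\<close>
definition ess_sup_on :: "'a::euclidean_space set \<Rightarrow> ('a \<Rightarrow> real) \<Rightarrow> ennreal" where
  "ess_sup_on S f = Inf {c::ennreal. AE x in lebesgue. x \<in> S \<longrightarrow> ennreal \<bar>f x\<bar> \<le> c}"

text \<open>Conjugate exponent r' = p/(p-q) of r = p/q, used where p /= q (r' = infinity where p = q).\<close>
definition rconj :: "('a \<Rightarrow> real) \<Rightarrow> ('a \<Rightarrow> real) \<Rightarrow> 'a \<Rightarrow> real" where
  "rconj p q x = p x / (p x - q x)"

definition rconj_norm :: "'a::euclidean_space set \<Rightarrow> ('a \<Rightarrow> real) \<Rightarrow> ('a \<Rightarrow> real) \<Rightarrow> ('a \<Rightarrow> real) \<Rightarrow> ennreal" where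
  "rconj_norm \<Omega> p q v = (INF l \<in> {l::real. l > 0 \<and>
      vmodular {x \<in> \<Omega>. p x \<noteq> q x} (rconj p q) (\<lambda>x. v x / l)
      + ess_sup_on {x \<in> \<Omega>. p x = q x} (\<lambda>x. v x / l) \<le> 1}. ennreal l)"

definition almost_compact :: "'a::euclidean_space set \<Rightarrow> ('a \<Rightarrow> real) \<Rightarrow> ('a \<Rightarrow> real) \<Rightarrow> bool" where
  "almost_compact \<Omega> e f \<longleftrightarrow>
    (\<forall>E :: nat \<Rightarrow> 'a set.
       (\<forall>n. E n \<in> sets lebesgue \<and> E n \<subseteq> \<Omega>) \<and>
       (AE x in lebesgue. x \<in> \<Omega> \<longrightarrow> (\<lambda>n. indicator (E n) x :: real) \<longlonglongrightarrow> 0)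
       \<longrightarrow> ((\<lambda>n. SUP u \<in> {u \<in> vLp \<Omega> e. vnorm \<Omega> e u \<le> 1}.
                 vnorm \<Omega> f (\<lambda>x. u x * indicator (E n) x)) \<longlonglongrightarrow> 0))"

end

theory Submission
  imports Defs
begin

lemma getw:
  fixes \<Omega> E :: "'a::euclidean_space set" and p q :: "'a \<Rightarrow> real" and \<alpha> \<beta> :: real
  assumes Om: "\<Omega> \<in> sets lebesgue" and Ofin: "emeasure lebesgue \<Omega> < \<infinity>"
    and pm: "set_borel_measurable lebesgue \<Omega> p"
    and qm: "set_borel_measurable lebesgue \<Omega> q"
    and pq: "\<forall>x\<in>\<Omega>. 1 \<le> q x \<and> q x \<le> p x"
    and b0: "0 < \<beta>" and b1: "\<beta> \<le> 1" and ba: "\<beta> < \<alpha>"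
    and Em: "E \<in> sets lebesgue" and EO: "E \<subseteq> \<Omega>"
    and hyp: "rconj_norm \<Omega> p q (\<lambda>x. indicator E x) \<ge> ennreal \<alpha>"
  shows "\<exists>A w. A \<subseteq> E \<and> A \<in> sets lebesgue \<and> w \<in> borel_measurable lebesgue \<and> (\<forall>x\<in>A. 0 \<le> w x)
     \<and> (\<integral>\<^sup>+x\<in>A. ennreal (w x) \<partial>lebesgue) = 1 \<and> (\<forall>x\<in>A. \<beta> * w x \<le> w x powr (q x / p x))"
proof -
  define P where "P x = indicator \<Omega> x * p x" for x
  define Q where "Q x = indicator \<Omega> x * q x" for x
  have Pm[measurable]: "P \<in> borel_measurable lebesgue" using pm unfolding set_borel_measurable_def P_def by simp
  have Qm[measurable]: "Q \<in> borel_measurable lebesgue" using qm unfolding set_borel_measurable_def Q_def by simp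
  have PO: "x \<in> \<Omega> \<Longrightarrow> P x = p x" "x \<in> \<Omega> \<Longrightarrow> Q x = q x" for x by (auto simp: P_def Q_def)
  define G where "G = {x\<in>\<Omega>. p x = q x}"
  define F where "F = {x\<in>\<Omega>. p x \<noteq> q x}"
  have G_eq: "G = \<Omega> \<inter> {x \<in> space lebesgue. P x = Q x}" unfolding G_def using PO by auto
  have F_eq: "F = \<Omega> \<inter> {x \<in> space lebesgue. P x \<noteq> Q x}" unfolding F_def using PO by auto
  have Gm[measurable]: "G \<in> sets lebesgue" unfolding G_eq using Om by measurable
  have Fm[measurable]: "F \<in> sets lebesgue" unfolding F_eq using Om by measurable
  have notadm: "\<not> (vmodular F (rconj p q) (\<lambda>x. indicator E x / \<beta>) + ess_sup_on G (\<lambda>x. indicator E x / \<beta>) \<le> 1)"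
  proof
    assume adm: "vmodular F (rconj p q) (\<lambda>x. indicator E x / \<beta>) + ess_sup_on G (\<lambda>x. indicator E x / \<beta>) \<le> 1"
    have "rconj_norm \<Omega> p q (\<lambda>x. indicator E x) \<le> ennreal \<beta>"
      unfolding rconj_norm_def by (rule INF_lower2[of \<beta>]) (use adm b0 in \<open>auto simp: F_def G_def\<close>)
    moreover have "ennreal \<beta> < ennreal \<alpha>" using ba b0 by (simp add: ennreal_lessI)
    ultimately show False using hyp by simp
  qed
  show ?thesis
  proof (cases "emeasure lebesgue (E \<inter> G) = 0")
    case False
    define H where "H = E \<inter> G"
    have Hm: "H \<in> sets lebesgue" unfolding H_def using Em Gm by auto
    have Hfin: "emeasure lebesgue H \<noteq> \<infinity>"
    proof -
      have "emeasure lebesgue H \<le> emeasure lebesgue \<Omega>" by (rule emeasure_mono) (use Om EO in \<open>auto simp: H_def\<close>)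
      then show ?thesis using Ofin by (metis linorder_not_le top.not_eq_extremum)
    qed
    define m where "m = measure lebesgue H"
    have Hm_eq: "emeasure lebesgue H = ennreal m" unfolding m_def using Hfin by (simp add: emeasure_eq_ennreal_measure)
    have m0: "m > 0" using False Hm_eq unfolding H_def
      by (metis ennreal_0 m_def measure_nonneg order_less_le)
    have int: "(\<integral>\<^sup>+x\<in>H. ennreal (1/m) \<partial>lebesgue) = 1"
      using nn_integral_cmult_indicator[OF Hm, of "ennreal (1/m)"] Hm_eq m0
      by (simp add: ennreal_mult[symmetric])
    have pt: "\<forall>x\<in>H. \<beta> * (1/m) \<le> (1/m) powr (q x / p x)"
    proof
      fix x assume "x \<in> H"
      then have "p x = q x" "1 \<le> q x" using pq EO unfolding H_def G_def by auto
      then show "\<beta> * (1/m) \<le> (1/m) powr (q x / p x)" using b1 m0 by (simp add: divide_right_mono)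
    qed
    show ?thesis
      by (rule exI[of _ H], rule exI[of _ "\<lambda>x. 1/m"]) (use Hm int pt m0 in \<open>auto simp: H_def\<close>)
  next
    case True
    have ess: "ess_sup_on G (\<lambda>x. indicator E x / \<beta>) = 0"
    proof -
      have "E \<inter> G \<in> null_sets lebesgue" using True Em Gm by (auto intro: null_setsI)
      then have "AE x in lebesgue. x \<notin> E \<inter> G" by (rule AE_not_in)
      then have "AE x in lebesgue. x \<in> G \<longrightarrow> ennreal \<bar>indicator E x / \<beta>\<bar> \<le> 0"
        by (rule eventually_mono) auto
      then have "ess_sup_on G (\<lambda>x. indicator E x / \<beta>) \<le> 0"
        unfolding ess_sup_on_def by (intro Inf_lower) simp
      then show ?thesis by simp
    qed
    define g where "g x = (1/\<beta>) powr (rconj P Q x)" for x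
    have gm[measurable]: "g \<in> borel_measurable lebesgue" unfolding g_def rconj_def by measurable
    have vm: "vmodular F (rconj p q) (\<lambda>x. indicator E x / \<beta>) = (\<integral>\<^sup>+x. ennreal (g x) * indicator (E \<inter> F) x \<partial>lebesgue)"
      unfolding vmodular_def
    proof (rule nn_integral_cong)
      fix x
      show "ennreal (\<bar>indicator E x / \<beta>\<bar> powr rconj p q x) * indicator F x = ennreal (g x) * indicator (E \<inter> F) x"
        using PO[of x] b0 by (cases "x \<in> E"; cases "x \<in> F") (auto simp: g_def rconj_def F_def)
    qed
    have gt1: "1 < (\<integral>\<^sup>+x. ennreal (g x) * indicator (E \<inter> F) x \<partial>lebesgue)"
      using notadm ess vm by (simp add: not_le)
    define A where "A k = E \<inter> F \<inter> {x \<in> space lebesgue. rconj P Q x \<le> real k}" for k :: nat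
    have Am[measurable]: "A k \<in> sets lebesgue" for k unfolding A_def rconj_def using Em Fm by measurable
    have incA: "incseq A" unfolding incseq_def A_def by (auto intro: order_trans)
    have UA: "(\<Union>k. A k) = E \<inter> F"
    proof
      show "E \<inter> F \<subseteq> (\<Union>k. A k)"
      proof
        fix x assume "x \<in> E \<inter> F"
        moreover obtain k :: nat where "rconj P Q x \<le> real k" using real_arch_simple by blast
        ultimately show "x \<in> (\<Union>k. A k)" unfolding A_def by auto
      qed
    qed (auto simp: A_def)
    define D where "D = density lebesgue g"
    have sD: "sets D = sets lebesgue" unfolding D_def by simp
    have eD: "emeasure D S = (\<integral>\<^sup>+x. ennreal (g x) * indicator S x \<partial>lebesgue)" if "S \<in> sets lebesgue" for S
      unfolding D_def using emeasure_density[OF _ that, of "\<lambda>x. ennreal (g x)"] by simp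
    have "(SUP k. emeasure D (A k)) = emeasure D (\<Union>k. A k)"
    proof (rule SUP_emeasure_incseq)
      show "range A \<subseteq> sets D" using sD Am by blast
    qed (rule incA)
    then have "(SUP k. emeasure D (A k)) = (\<integral>\<^sup>+x. ennreal (g x) * indicator (E \<inter> F) x \<partial>lebesgue)"
      using UA eD[of "E \<inter> F"] Em Fm by simp
    with gt1 obtain k where k1: "1 < emeasure D (A k)" by (metis less_SUP_iff)
    define I where "I = (\<integral>\<^sup>+x. ennreal (g x) * indicator (A k) x \<partial>lebesgue)"
    have kI: "1 < I" using k1 eD[of "A k"] unfolding I_def by simp
    have Ifin: "I < \<infinity>"
    proof -
      have "I \<le> (\<integral>\<^sup>+x. ennreal ((1/\<beta>) powr real k) * indicator \<Omega> x \<partial>lebesgue)"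
        unfolding I_def
      proof (rule nn_integral_mono)
        fix x
        show "ennreal (g x) * indicator (A k) x \<le> ennreal ((1/\<beta>) powr real k) * indicator \<Omega> x"
        proof (cases "x \<in> A k")
          case True
          then have "rconj P Q x \<le> real k" "x \<in> \<Omega>" unfolding A_def F_def by auto
          then have "g x \<le> (1/\<beta>) powr real k" unfolding g_def using b0 b1
            by (intro powr_mono) (auto simp: field_simps)
          then show ?thesis using True \<open>x \<in> \<Omega>\<close> by (simp add: ennreal_leI)
        qed simp
      qed
      also have "\<dots> = ennreal ((1/\<beta>) powr real k) * emeasure lebesgue \<Omega>"
        by (rule nn_integral_cmult_indicator[OF Om])
      also have "\<dots> < \<infinity>" using Ofin by (simp add: ennreal_mult_less_top)
      finally show ?thesis .
    qed
    define M where "M = enn2real I"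
    have IM: "I = ennreal M" unfolding M_def using Ifin by (simp add: less_top)
    have M1: "1 < M" using kI IM by (metis ennreal_1 ennreal_less_iff zero_le_one)
    define w where "w x = g x / M" for x
    have int: "(\<integral>\<^sup>+x\<in>A k. ennreal (w x) \<partial>lebesgue) = 1"
    proof -
      have "(\<integral>\<^sup>+x\<in>A k. ennreal (w x) \<partial>lebesgue) = (\<integral>\<^sup>+x. ennreal (1/M) * (ennreal (g x) * indicator (A k) x) \<partial>lebesgue)"
        by (rule nn_integral_cong) (use M1 in \<open>auto simp: w_def indicator_def g_def ennreal_mult'[symmetric]\<close>)
      also have "\<dots> = ennreal (1/M) * I" unfolding I_def by (rule nn_integral_cmult) measurable
      also have "\<dots> = 1" using IM M1 by (simp add: ennreal_mult[symmetric])
      finally show ?thesis .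
    qed
    have pt: "\<forall>x\<in>A k. \<beta> * w x \<le> w x powr (q x / p x)"
    proof
      fix x assume xA: "x \<in> A k"
      then have xO: "x \<in> \<Omega>" and ne: "p x \<noteq> q x" unfolding A_def F_def by auto
      have q1: "1 \<le> q x" and qp: "q x < p x" using pq xO ne by auto
      define r where "r = p x / (p x - q x)"
      have gx: "g x = (1/\<beta>) powr r" unfolding g_def r_def rconj_def using PO[OF xO] by simp
      have rq: "r * (q x / p x) = r - 1" unfolding r_def using q1 qp by (simp add: field_simps)
      have g0: "0 < g x" using gx b0 by simp
      have "w x powr (q x / p x) = g x powr (q x / p x) / M powr (q x / p x)"
        unfolding w_def by (simp add: powr_divide)
      also have "g x powr (q x / p x) = \<beta> * g x"
        unfolding gx powr_powr rq using b0 by (simp add: powr_diff)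
      also have "M powr (q x / p x) \<le> M powr 1" using M1 q1 qp by (intro powr_mono) auto
      then have "\<beta> * g x / M \<le> \<beta> * g x / M powr (q x / p x)"
        using M1 g0 b0 by (intro divide_left_mono) auto
      finally show "\<beta> * w x \<le> w x powr (q x / p x)" unfolding w_def by simp
    qed
    have wm: "w \<in> borel_measurable lebesgue" unfolding w_def by measurable
    have w0: "\<forall>x\<in>A k. 0 \<le> w x" using M1 by (simp add: w_def g_def)
    have AE: "A k \<subseteq> E" unfolding A_def by auto
    show ?thesis using int pt wm w0 AE Am[of k] by blast
  qed
qed

lemma key:
  fixes \<Omega> E A :: "'a::euclidean_space set" and w p q :: "'a \<Rightarrow> real" and \<beta> :: real
  assumes Om: "\<Omega> \<in> sets lebesgue" and AE: "A \<subseteq> E" "E \<subseteq> \<Omega>" and Am: "A \<in> sets lebesgue"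
    and wm: "w \<in> borel_measurable lebesgue"
    and pm: "set_borel_measurable lebesgue \<Omega> p"
    and pq: "\<forall>x\<in>\<Omega>. 1 \<le> q x \<and> q x \<le> p x"
    and w0: "\<forall>x\<in>A. 0 \<le> w x"
    and wi: "(\<integral>\<^sup>+x\<in>A. ennreal (w x) \<partial>lebesgue) = 1"
    and wb: "\<forall>x\<in>A. \<beta> * w x \<le> w x powr (q x / p x)"
    and b0: "0 < \<beta>" and b1: "\<beta> \<le> 1"
  shows "\<exists>u \<in> vLp \<Omega> p. vnorm \<Omega> p u \<le> 1 \<and> vnorm \<Omega> q (\<lambda>x. u x * indicator E x) \<ge> ennreal \<beta>"
proof -
  define P where "P x = indicator \<Omega> x * p x" for x
  have Pm: "P \<in> borel_measurable lebesgue" using pm unfolding set_borel_measurable_def P_def by simp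
  define u where "u x = indicator A x * w x powr (1 / P x)" for x
  have um: "u \<in> borel_measurable lebesgue" unfolding u_def using Pm wm Am by measurable
  have AO: "A \<subseteq> \<Omega>" using AE by auto
  have p1: "x \<in> A \<Longrightarrow> 1 \<le> p x" for x using pq AO by force
  have PA: "x \<in> A \<Longrightarrow> P x = p x" for x using AO by (auto simp: P_def)
  have mod1: "vmodular \<Omega> p (\<lambda>x. u x / 1) = 1"
  proof -
    have "vmodular \<Omega> p (\<lambda>x. u x / 1) = (\<integral>\<^sup>+x. ennreal (w x) * indicator A x \<partial>lebesgue)"
      unfolding vmodular_def
    proof (rule nn_integral_cong)
      fix x
      show "ennreal (\<bar>u x / 1\<bar> powr p x) * indicator \<Omega> x = ennreal (w x) * indicator A x"
      proof (cases "x \<in> A")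
        case True
        then have "\<bar>u x / 1\<bar> powr p x = w x"
          using p1[OF True] PA[OF True] w0 True by (simp add: u_def powr_powr)
        then show ?thesis using True AO by auto
      next
        case False then show ?thesis by (simp add: u_def)
      qed
    qed
    then show ?thesis using wi by simp
  qed
  have n1: "vnorm \<Omega> p u \<le> 1"
    unfolding vnorm_def by (rule INF_lower2[of 1]) (use mod1 in auto)
  have uL: "u \<in> vLp \<Omega> p"
    unfolding vLp_def set_borel_measurable_def using n1 um Om
    by (auto simp: top_unique intro: order.strict_trans1[of _ 1])
  have n2: "vnorm \<Omega> q (\<lambda>x. u x * indicator E x) \<ge> ennreal \<beta>"
    unfolding vnorm_def
  proof (rule INF_greatest)
    fix l assume "l \<in> {l::real. l > 0 \<and> vmodular \<Omega> q (\<lambda>x. u x * indicator E x / l) \<le> 1}"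
    then have l0: "l > 0" and lm: "vmodular \<Omega> q (\<lambda>x. u x * indicator E x / l) \<le> 1" by auto
    show "ennreal \<beta> \<le> ennreal l"
    proof (rule ccontr)
      assume "\<not> ennreal \<beta> \<le> ennreal l"
      then have lb: "l < \<beta>" using ennreal_le_iff l0 by (metis less_imp_le not_le)
      have "ennreal (\<beta> / l) = ennreal (\<beta>/l) * (\<integral>\<^sup>+x. ennreal (w x) * indicator A x \<partial>lebesgue)"
        using wi by simp
      also have "\<dots> = (\<integral>\<^sup>+x. ennreal (\<beta>/l) * (ennreal (w x) * indicator A x) \<partial>lebesgue)"
        by (rule nn_integral_cmult[symmetric]) (use wm Am in measurable)
      also have "\<dots> \<le> vmodular \<Omega> q (\<lambda>x. u x * indicator E x / l)"
        unfolding vmodular_def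
      proof (rule nn_integral_mono)
        fix x
        show "ennreal (\<beta>/l) * (ennreal (w x) * indicator A x)
          \<le> ennreal (\<bar>u x * indicator E x / l\<bar> powr q x) * indicator \<Omega> x"
        proof (cases "x \<in> A")
          case True
          have q1: "1 \<le> q x" and qp: "q x \<le> p x" using pq AO True by auto
          have "\<bar>u x * indicator E x / l\<bar> powr q x = (w x powr (1 / p x)) powr q x / l powr q x"
            using True AE l0 w0 PA[OF True] by (auto simp: u_def powr_divide)
          also have "\<dots> = w x powr (q x / p x) / l powr q x" by (simp add: powr_powr)
          also have "\<dots> \<ge> w x powr (q x / p x) / l"
          proof -
            have "l powr q x \<le> l powr 1" using lb b1 l0 q1 by (intro powr_mono') auto
            then have "l powr q x \<le> l" using l0 by simp
            moreover have "0 < l powr q x" using l0 by simp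
            ultimately show ?thesis using l0 by (intro divide_left_mono) auto
          qed
          finally have "\<beta> / l * w x \<le> \<bar>u x * indicator E x / l\<bar> powr q x"
            using wb True l0 by (smt (verit) divide_right_mono mult.commute times_divide_eq_right)
          then have "ennreal (\<beta>/l * w x) \<le> ennreal (\<bar>u x * indicator E x / l\<bar> powr q x)"
            by (rule ennreal_leI)
          moreover have "ennreal (\<beta>/l) * (ennreal (w x) * indicator A x) = ennreal (\<beta>/l * w x)"
            using True w0 b0 l0 by (simp add: ennreal_mult[symmetric])
          moreover have "indicator \<Omega> x = (1::ennreal)" "indicator A x = (1::ennreal)"
            using True AO by auto
          ultimately show ?thesis by (metis mult_1_right)
        next
          case False then show ?thesis by simp
        qed
      qed
      also have "\<dots> \<le> 1" by (rule lm)
      finally have "\<beta> / l \<le> 1" by (simp add: ennreal_le_1)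
      then show False using lb l0 by (simp add: field_simps)
    qed
  qed
  show ?thesis using uL n1 n2 by blast
qed

theorem lemma3p5:
  fixes \<Omega> :: "'a::euclidean_space set"
    and p q :: "'a \<Rightarrow> real"
    and pplus \<alpha> :: real
    and E :: "nat \<Rightarrow> 'a set"
  assumes "open \<Omega>" and "bounded \<Omega>"
    and "set_borel_measurable lebesgue \<Omega> p"
    and "set_borel_measurable lebesgue \<Omega> q"
    and "\<forall>x\<in>\<Omega>. 1 \<le> q x \<and> q x \<le> p x \<and> p x \<le> pplus"
    and "\<alpha> > 0"
    and "\<forall>n. E n \<in> sets lebesgue \<and> E n \<subseteq> \<Omega>"
    and "(\<lambda>n. emeasure lebesgue (E n)) \<longlonglongrightarrow> 0"
    and "\<forall>n. rconj_norm \<Omega> p q (\<lambda>x. indicator (E n) x) \<ge> ennreal \<alpha>"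
  shows "\<not> almost_compact \<Omega> p q"
proof
  assume ac: "almost_compact \<Omega> p q"
  have fm: "\<Omega> \<in> fmeasurable lebesgue" using lmeasurable_open assms(1,2) by blast
  have Om: "\<Omega> \<in> sets lebesgue" and Ofin: "emeasure lebesgue \<Omega> < \<infinity>"
    using fm by (auto simp: fmeasurable_def)
  define \<beta> where "\<beta> = min \<alpha> 1 / 2"
  have b0: "0 < \<beta>" and b1: "\<beta> \<le> 1" and ba: "\<beta> < \<alpha>" using assms(6) by (auto simp: \<beta>_def)
  have pq: "\<forall>x\<in>\<Omega>. 1 \<le> q x \<and> q x \<le> p x" using assms(5) by auto
  have "\<forall>n. \<exists>u. u \<in> vLp \<Omega> p \<and> vnorm \<Omega> p u \<le> 1 \<and> vnorm \<Omega> q (\<lambda>x. u x * indicator (E n) x) \<ge> ennreal \<beta>"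
  proof
    fix n
    obtain A w where Aw: "A \<subseteq> E n" "A \<in> sets lebesgue" "w \<in> borel_measurable lebesgue" "\<forall>x\<in>A. 0 \<le> w x"
      "(\<integral>\<^sup>+x\<in>A. ennreal (w x) \<partial>lebesgue) = 1" "\<forall>x\<in>A. \<beta> * w x \<le> w x powr (q x / p x)"
      using getw[OF Om Ofin assms(3,4) pq b0 b1 ba, of "E n"] assms(7,9) by blast
    show "\<exists>u. u \<in> vLp \<Omega> p \<and> vnorm \<Omega> p u \<le> 1 \<and> vnorm \<Omega> q (\<lambda>x. u x * indicator (E n) x) \<ge> ennreal \<beta>"
      using key[OF Om Aw(1) _ Aw(2,3) assms(3) pq Aw(4,5,6) b0 b1] assms(7) by blast
  qed
  then obtain u where u: "\<And>n. u n \<in> vLp \<Omega> p" "\<And>n. vnorm \<Omega> p (u n) \<le> 1"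
    "\<And>n. vnorm \<Omega> q (\<lambda>x. u n x * indicator (E n) x) \<ge> ennreal \<beta>" by metis
  have "\<forall>k. \<exists>n. emeasure lebesgue (E n) < ennreal ((1/2)^k)"
  proof
    fix k :: nat
    have "eventually (\<lambda>n. emeasure lebesgue (E n) < ennreal ((1/2)^k)) sequentially"
      by (rule order_tendstoD(2)[OF assms(8)]) simp
    then show "\<exists>n. emeasure lebesgue (E n) < ennreal ((1/2)^k)"
      unfolding eventually_sequentially by blast
  qed
  then obtain s where s: "\<And>k. emeasure lebesgue (E (s k)) < ennreal ((1/2)^k)" by metis
  define E' where "E' k = E (s k)" for k
  have E'm: "\<And>k. E' k \<in> sets lebesgue" "\<And>k. E' k \<subseteq> \<Omega>" using assms(7) by (auto simp: E'_def)
  have E'fin: "emeasure lebesgue (E' k) < \<infinity>" for k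
    unfolding E'_def by (rule order.strict_trans[OF s[of k]]) simp
  have mb: "norm (measure lebesgue (E' k)) \<le> (1/2)^k" for k
  proof -
    have "ennreal (measure lebesgue (E' k)) < ennreal ((1/2)^k)"
      using s[of k] E'fin[of k] unfolding E'_def by (simp add: emeasure_eq_ennreal_measure)
    then show ?thesis by (simp add: ennreal_less_iff)
  qed
  have sm: "summable (\<lambda>k. measure lebesgue (E' k))"
    by (rule summable_comparison_test'[OF summable_geometric[of "1/2::real"] mb]) auto
  have "AE x in lebesgue. eventually (\<lambda>k. x \<in> space lebesgue - E' k) sequentially"
    by (rule borel_cantelli_AE1[OF E'm(1) E'fin sm])
  then have ae: "AE x in lebesgue. x \<in> \<Omega> \<longrightarrow> (\<lambda>k. indicator (E' k) x :: real) \<longlonglongrightarrow> 0"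
  proof (rule eventually_mono)
    fix x assume "eventually (\<lambda>k. x \<in> space lebesgue - E' k) sequentially"
    then have "eventually (\<lambda>k. indicator (E' k) x = (0::real)) sequentially"
      by (rule eventually_mono) auto
    then have "(\<lambda>k. indicator (E' k) x :: real) \<longlonglongrightarrow> 0" by (rule tendsto_eventually)
    then show "x \<in> \<Omega> \<longrightarrow> (\<lambda>k. indicator (E' k) x :: real) \<longlonglongrightarrow> 0" by simp
  qed
  have lim: "(\<lambda>k. SUP v \<in> {v \<in> vLp \<Omega> p. vnorm \<Omega> p v \<le> 1}.
                 vnorm \<Omega> q (\<lambda>x. v x * indicator (E' k) x)) \<longlonglongrightarrow> 0"
    using ac[unfolded almost_compact_def, rule_format, of E'] E'm ae by blast
  have lb: "ennreal \<beta> \<le> (SUP v \<in> {v \<in> vLp \<Omega> p. vnorm \<Omega> p v \<le> 1}.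
                 vnorm \<Omega> q (\<lambda>x. v x * indicator (E' k) x))" for k
    by (rule SUP_upper2[of "u (s k)"]) (use u in \<open>auto simp: E'_def\<close>)
  have "ennreal \<beta> \<le> 0" by (rule LIMSEQ_le_const[OF lim]) (use lb in auto)
  then show False using b0 by simp
qed

end
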